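(* Let $\mu,\nu\in P_2^r(\mathbb{R}^d)$ and let $r$ be the unique optimal transport map for the 2-Wasserstein distance with $r_\#\mu=\nu$. Let $N\subset\mathbb{R}^d$ be a $\mu$-negligible set such that $\langle r(x_1)-r(x_2),x_1-x_2\rangle>0$ for all distinct $x_1,x_2\in\mathbb{R}^d\setminus N$. For $t\in[0,1]$ let $h_t(x)=(1-t)x+tr(x)$ and $\mu_t=(h_t)_\#\mu$. If $r$ is continuous and $\operatorname{supp}(\mu)\setminus N$ contains a nonempty open set, then every geodesic measure $\mu_t$, $t\in[0,1]$, is a probabilistic frame.
   Context: $P_2^r(\mathbb{R}^d)$ denotes the set of probability measures on $\mathbb{R}^d$ with finite second moment that are absolutely continuous with respect to Lebesgue measure. The optimal transport map $r$ is the map with $r_\#\mu=\nu$ minimizing $\int\|x-r(x)\|^2d\mu(x)$; such an $r$ exists, is unique $\mu$-a.e., and a $\mu$-negligible set $N$ as described exists. A probabilistic frame is a probability measure on $\mathbb{R}^d$ with finite second moment whose support spans $\mathbb{R}^d$. $\operatorname{supp}(\mu)$ is the set of points all of whose open neighborhoods have positive $\mu$-measure. *)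

theory Defs
  imports "HOL-Probability.Probability"
begin

definition P2 :: "'a::euclidean_space measure \<Rightarrow> bool" where
  "P2 \<mu> \<longleftrightarrow> prob_space \<mu> \<and> sets \<mu> = sets borel \<and> integrable \<mu> (\<lambda>x. (norm x)\<^sup>2)"

definition P2r :: "'a::euclidean_space measure \<Rightarrow> bool" where
  "P2r \<mu> \<longleftrightarrow> P2 \<mu> \<and> absolutely_continuous lborel \<mu>"

definition transport_map :: "'a::euclidean_space measure \<Rightarrow> 'a measure \<Rightarrow> ('a \<Rightarrow> 'a) \<Rightarrow> bool" where
  "transport_map \<mu> \<nu> r \<longleftrightarrow> r \<in> borel_measurable \<mu> \<and> distr \<mu> borel r = \<nu>"

definition optimal_transport_map :: "'a::euclidean_space measure \<Rightarrow> 'a measure \<Rightarrow> ('a \<Rightarrow> 'a) \<Rightarrow> bool" where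
  "optimal_transport_map \<mu> \<nu> r \<longleftrightarrow> transport_map \<mu> \<nu> r \<and>
     (\<forall>s. transport_map \<mu> \<nu> s \<longrightarrow>
        (\<integral>\<^sup>+ x. ennreal ((norm (x - r x))\<^sup>2) \<partial>\<mu>) \<le> (\<integral>\<^sup>+ x. ennreal ((norm (x - s x))\<^sup>2) \<partial>\<mu>))"

definition msupp :: "'a::topological_space measure \<Rightarrow> 'a set" where
  "msupp \<mu> = {x. \<forall>U. open U \<and> x \<in> U \<longrightarrow> emeasure \<mu> U > 0}"

definition probabilistic_frame :: "'a::euclidean_space measure \<Rightarrow> bool" where
  "probabilistic_frame \<mu> \<longleftrightarrow> P2 \<mu> \<and> span (msupp \<mu>) = UNIV"

end

theory Submission
  imports Defs "HOL-Homology.Invariance_of_Domain"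
begin

lemma open_span_UNIV:
  fixes S :: "'a::euclidean_space set"
  assumes "open S" "S \<noteq> {}"
  shows "span S = UNIV"
proof -
  have "dim S = dim (UNIV::'a set)"
    using dim_openin[of UNIV S] assms by simp
  then show ?thesis using dim_eq_full by auto
qed

theorem mainTheorem13:
  fixes \<mu> \<nu> :: "'a::euclidean_space measure" and r :: "'a \<Rightarrow> 'a" and N :: "'a set"
  assumes "P2r \<mu>" and "P2r \<nu>"
    and "optimal_transport_map \<mu> \<nu> r"
    and "\<exists>A\<in>null_sets \<mu>. N \<subseteq> A"
    and "\<forall>x1 x2. x1 \<notin> N \<and> x2 \<notin> N \<and> x1 \<noteq> x2 \<longrightarrow> (r x1 - r x2) \<bullet> (x1 - x2) > 0"
    and "continuous_on UNIV r"
    and "\<exists>U. open U \<and> U \<noteq> {} \<and> U \<subseteq> msupp \<mu> - N"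
  shows "\<forall>t\<in>{0..1::real}.
           probabilistic_frame (distr \<mu> borel (\<lambda>x. (1 - t) *\<^sub>R x + t *\<^sub>R r x))"
proof
  fix t :: real assume t: "t \<in> {0..1}"
  define h where "h = (\<lambda>x. (1 - t) *\<^sub>R x + t *\<^sub>R r x)"
  have P\<mu>: "prob_space \<mu>" "sets \<mu> = sets borel" "integrable \<mu> (\<lambda>x. (norm x)\<^sup>2)"
    using assms(1) by (auto simp: P2r_def P2_def)
  have P\<nu>: "integrable \<nu> (\<lambda>x. (norm x)\<^sup>2)"
    using assms(2) by (auto simp: P2r_def P2_def)
  have rm: "r \<in> borel_measurable \<mu>" and dr: "distr \<mu> borel r = \<nu>"
    using assms(3) by (auto simp: optimal_transport_map_def transport_map_def)
  have rmb: "r \<in> borel_measurable borel"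
    using assms(6) by (simp add: borel_measurable_continuous_onI)
  have hc: "continuous_on UNIV h"
    unfolding h_def by (intro continuous_intros assms(6))
  have hmb: "h \<in> borel_measurable borel"
    using hc by (simp add: borel_measurable_continuous_onI)
  have hm: "h \<in> borel_measurable \<mu>"
    using hmb measurable_cong_sets[OF P\<mu>(2) refl] by auto
  have ir: "integrable \<mu> (\<lambda>x. (norm (r x))\<^sup>2)"
  proof -
    have "integrable (distr \<mu> borel r) (\<lambda>x. (norm x)\<^sup>2)" using P\<nu> dr by simp
    moreover have "(\<lambda>x. (norm x)\<^sup>2) \<in> borel_measurable (borel::'a measure)" by measurable
    ultimately show ?thesis using integrable_distr_eq[OF rm, of "\<lambda>x. (norm x)\<^sup>2"] by simp
  qed
  have P2h: "P2 (distr \<mu> borel h)"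
    unfolding P2_def
  proof (intro conjI)
    show "prob_space (distr \<mu> borel h)"
      by (rule prob_space.prob_space_distr[OF P\<mu>(1) hm])
    show "sets (distr \<mu> borel h) = sets borel" by simp
    have "integrable \<mu> (\<lambda>x. (norm (h x))\<^sup>2)"
    proof (rule Bochner_Integration.integrable_bound)
      show "integrable \<mu> (\<lambda>x. 2 * (norm x)\<^sup>2 + 2 * (norm (r x))\<^sup>2)"
        using P\<mu>(3) ir by auto
      show "(\<lambda>x. (norm (h x))\<^sup>2) \<in> borel_measurable \<mu>" using hm by measurable
      show "AE x in \<mu>. norm ((norm (h x))\<^sup>2) \<le> norm (2 * (norm x)\<^sup>2 + 2 * (norm (r x))\<^sup>2)"
      proof (rule AE_I2)
        fix x
        have a: "norm (h x) \<le> norm x + norm (r x)"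
        proof -
          have "norm (h x) \<le> norm ((1-t) *\<^sub>R x) + norm (t *\<^sub>R r x)"
            unfolding h_def by (rule norm_triangle_ineq)
          also have "\<dots> = (1-t) * norm x + t * norm (r x)" using t by simp
          also have "\<dots> \<le> norm x + norm (r x)"
          proof -
            have "(1-t) * norm x \<le> norm x" using t by (simp add: mult_left_le_one_le)
            moreover have "t * norm (r x) \<le> norm (r x)" using t by (simp add: mult_left_le_one_le)
            ultimately show ?thesis by linarith
          qed
          finally show ?thesis .
        qed
        have "(norm (h x))\<^sup>2 \<le> (norm x + norm (r x))\<^sup>2"
          using a by (simp add: power_mono)
        also have "\<dots> \<le> 2 * (norm x)\<^sup>2 + 2 * (norm (r x))\<^sup>2"
        proof -
          have "0 \<le> (norm x - norm (r x))\<^sup>2" by simp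
          then show ?thesis by (simp add: power2_eq_square algebra_simps)
        qed
        finally show "norm ((norm (h x))\<^sup>2) \<le> norm (2 * (norm x)\<^sup>2 + 2 * (norm (r x))\<^sup>2)"
          by simp
      qed
    qed
    then show "integrable (distr \<mu> borel h) (\<lambda>x. (norm x)\<^sup>2)"
      using integrable_distr_eq[OF hm, of "\<lambda>x. (norm x)\<^sup>2"] by simp
  qed
  obtain U where U: "open U" "U \<noteq> {}" "U \<subseteq> msupp \<mu> - N" using assms(7) by blast
  have inj: "inj_on h U"
  proof (rule inj_onI)
    fix x1 x2 assume x: "x1 \<in> U" "x2 \<in> U" "h x1 = h x2"
    show "x1 = x2"
    proof (rule ccontr)
      assume ne: "x1 \<noteq> x2"
      have pos: "(r x1 - r x2) \<bullet> (x1 - x2) > 0" using assms(5) x U(3) ne by blast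
      have "(1 - t) *\<^sub>R (x1 - x2) + t *\<^sub>R (r x1 - r x2) = 0"
        using x(3) unfolding h_def by (simp add: algebra_simps)
      then have "((1 - t) *\<^sub>R (x1 - x2) + t *\<^sub>R (r x1 - r x2)) \<bullet> (x1 - x2) = 0" by simp
      then have eq: "(1 - t) * ((x1 - x2) \<bullet> (x1 - x2)) + t * ((r x1 - r x2) \<bullet> (x1 - x2)) = 0"
        by (simp add: inner_add_left)
      have "(x1 - x2) \<bullet> (x1 - x2) > 0" using ne by simp
      have "(1 - t) * ((x1 - x2) \<bullet> (x1 - x2)) \<ge> 0" using t \<open>(x1 - x2) \<bullet> (x1 - x2) > 0\<close> by simp
      moreover have "t * ((r x1 - r x2) \<bullet> (x1 - x2)) \<ge> 0" using t pos by simp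
      moreover have "t = 0 \<Longrightarrow> False" using eq \<open>(x1 - x2) \<bullet> (x1 - x2) > 0\<close> by simp
      moreover have "t > 0 \<Longrightarrow> t * ((r x1 - r x2) \<bullet> (x1 - x2)) > 0" using pos by simp
      ultimately show False using eq t by force
    qed
  qed
  have oh: "open (h ` U)"
    using invariance_of_domain[OF continuous_on_subset[OF hc] U(1) inj] by simp
  have sub: "h ` U \<subseteq> msupp (distr \<mu> borel h)"
  proof
    fix y assume "y \<in> h ` U"
    then obtain x where x: "x \<in> U" "y = h x" by blast
    show "y \<in> msupp (distr \<mu> borel h)"
      unfolding msupp_def
    proof (intro CollectI allI impI)
      fix V assume V: "open V \<and> y \<in> V"
      have ov: "open (h -` V)" using V hc by (simp add: continuous_on_open_vimage)
      have "x \<in> msupp \<mu>" using x U(3) by auto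
      then have "emeasure \<mu> (h -` V) > 0" using ov V x unfolding msupp_def by auto
      moreover have "h -` V \<inter> space \<mu> = h -` V"
        using P\<mu>(2) by (simp add: sets_eq_imp_space_eq)
      moreover have "V \<in> sets borel" using V by simp
      ultimately show "emeasure (distr \<mu> borel h) V > 0"
        by (simp add: emeasure_distr[OF hm])
    qed
  qed
  have "span (msupp (distr \<mu> borel h)) = UNIV"
    using span_mono[OF sub] open_span_UNIV[OF oh] U(2) by auto
  then show "probabilistic_frame (distr \<mu> borel (\<lambda>x. (1 - t) *\<^sub>R x + t *\<^sub>R r x))"
    using P2h unfolding probabilistic_frame_def h_def by simp
qed

end
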